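(* Let $\mathcal G$ and $\mathcal G'$ be two directed Eulerian multigraphs on a finite vertex set $V\ni v_0$, where $j_{u,v}$ and $j'_{u,v}$ denote the multiplicities of the directed edge $\langle u,v\rangle$ in $\mathcal G$ and $\mathcal G'$. Suppose that for all $u,v$, $j'_{u,v}\ge1$ if and only if $j_{u,v}\ge1$, and that $j_{u,v}\ge j'_{u,v}$. Then $$\frac{\mathrm{ar}_{v_0}(\mathcal G')}{\mathrm{ar}_{v_0}(\mathcal G)}\ge\prod_{u\ne v:\ j_{u,v}\ge1}\frac{j'_{u,v}}{j_{u,v}}.$$
   Context: A directed multigraph is Eulerian if it has a circuit traversing every directed edge exactly once (equivalently, connected and in-degree equals out-degree at every vertex). Parallel edges are distinguishable. $\mathrm{ar}_{v_0}(\mathcal G)$ is the number of arborescences of $\mathcal G$ rooted at $v_0$: spanning sub-multigraphs (choosing specific edge copies) forming directed trees in which every vertex $v\ne v_0$ has a unique directed path to $v_0$. *)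

theory Defs
  imports Complex_Main
begin

text \<open>A directed multigraph on a vertex set V is given by multiplicities
  j u v (number of parallel copies of the edge from u to v); it is supported on V.\<close>

definition mg_edges :: "'a set \<Rightarrow> ('a \<Rightarrow> 'a \<Rightarrow> nat) \<Rightarrow> ('a \<times> 'a \<times> nat) set" where
  "mg_edges V j = {(u, v, k). u \<in> V \<and> v \<in> V \<and> k < j u v}"

definition mg_rel :: "('a \<times> 'a \<times> nat) set \<Rightarrow> ('a \<times> 'a) set" where
  "mg_rel E = {(u, v). \<exists>k. (u, v, k) \<in> E}"

definition out_deg :: "'a set \<Rightarrow> ('a \<Rightarrow> 'a \<Rightarrow> nat) \<Rightarrow> 'a \<Rightarrow> nat" where
  "out_deg V j u = (\<Sum>v\<in>V. j u v)"

definition in_deg :: "'a set \<Rightarrow> ('a \<Rightarrow> 'a \<Rightarrow> nat) \<Rightarrow> 'a \<Rightarrow> nat" where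
  "in_deg V j v = (\<Sum>u\<in>V. j u v)"

text \<open>Eulerian: supported on V, connected (for balanced digraphs weak and strong
  connectivity coincide; we state strong connectivity on V), and in-degree = out-degree.\<close>
definition eulerian :: "'a set \<Rightarrow> ('a \<Rightarrow> 'a \<Rightarrow> nat) \<Rightarrow> bool" where
  "eulerian V j \<longleftrightarrow>
     (\<forall>u v. j u v \<noteq> 0 \<longrightarrow> u \<in> V \<and> v \<in> V) \<and>
     (\<forall>u\<in>V. \<forall>v\<in>V. (u, v) \<in> (mg_rel (mg_edges V j))\<^sup>*) \<and>
     (\<forall>v\<in>V. in_deg V j v = out_deg V j v)"

text \<open>Arborescence rooted at v0 (edges oriented towards the root): a set T of
  specific edge copies such that every vertex v \<noteq> v0 has exactly one outgoing
  edge in T, v0 has none, and every vertex has a directed path in T to v0.\<close>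
definition arborescence :: "'a set \<Rightarrow> ('a \<Rightarrow> 'a \<Rightarrow> nat) \<Rightarrow> 'a \<Rightarrow> ('a \<times> 'a \<times> nat) set \<Rightarrow> bool" where
  "arborescence V j v0 T \<longleftrightarrow>
     T \<subseteq> mg_edges V j \<and>
     (\<forall>v\<in>V. v \<noteq> v0 \<longrightarrow> (\<exists>!e. e \<in> T \<and> fst e = v)) \<and>
     (\<forall>e\<in>T. fst e \<noteq> v0) \<and>
     (\<forall>v\<in>V. (v, v0) \<in> (mg_rel T)\<^sup>*)"

definition ar :: "'a set \<Rightarrow> ('a \<Rightarrow> 'a \<Rightarrow> nat) \<Rightarrow> 'a \<Rightarrow> nat" where
  "ar V j v0 = card {T. arborescence V j v0 T}"

end

theory Submission
  imports Defs "HOL-Library.FuncSet"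
begin

definition frel :: "'a set \<Rightarrow> 'a \<Rightarrow> ('a \<Rightarrow> 'a) \<Rightarrow> ('a \<times> 'a) set" where
  "frel V v0 f = (\<lambda>u. (u, f u)) ` (V - {v0})"

definition shapes :: "'a set \<Rightarrow> 'a \<Rightarrow> ('a \<Rightarrow> 'a) set" where
  "shapes V v0 = {f \<in> PiE (V - {v0}) (\<lambda>_. V). \<forall>v\<in>V. (v, v0) \<in> (frel V v0 f)\<^sup>*}"

definition mkT :: "'a set \<Rightarrow> 'a \<Rightarrow> ('a \<Rightarrow> 'a) \<Rightarrow> ('a \<Rightarrow> nat) \<Rightarrow> ('a \<times> 'a \<times> nat) set" where
  "mkT V v0 f k = (\<lambda>u. (u, f u, k u)) ` (V - {v0})"

lemma mg_rel_mkT: "mg_rel (mkT V v0 f k) = frel V v0 f"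
  unfolding mg_rel_def mkT_def frel_def by auto

lemma arb_eq:
  "{T. arborescence V j v0 T} =
   (\<lambda>(f,k). mkT V v0 f k) ` (SIGMA f:shapes V v0. PiE (V-{v0}) (\<lambda>u. {..<j u (f u)}))"
proof
  show "(\<lambda>(f,k). mkT V v0 f k) ` (SIGMA f:shapes V v0. PiE (V-{v0}) (\<lambda>u. {..<j u (f u)}))
        \<subseteq> {T. arborescence V j v0 T}"
  proof clarify
    fix f k assume f: "f \<in> shapes V v0" and k: "k \<in> PiE (V-{v0}) (\<lambda>u. {..<j u (f u)})"
    show "arborescence V j v0 (mkT V v0 f k)"
      unfolding arborescence_def
    proof (intro conjI)
      show "mkT V v0 f k \<subseteq> mg_edges V j"
        using f k by (auto simp: mkT_def mg_edges_def shapes_def PiE_def Pi_def)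
      show "\<forall>v\<in>V. v \<noteq> v0 \<longrightarrow> (\<exists>!e. e \<in> mkT V v0 f k \<and> fst e = v)"
      proof (intro ballI impI)
        fix v assume "v \<in> V" "v \<noteq> v0"
        then show "\<exists>!e. e \<in> mkT V v0 f k \<and> fst e = v"
          by (intro ex1I[of _ "(v, f v, k v)"]) (auto simp: mkT_def)
      qed
      show "\<forall>e\<in>mkT V v0 f k. fst e \<noteq> v0" by (auto simp: mkT_def)
      show "\<forall>v\<in>V. (v, v0) \<in> (mg_rel (mkT V v0 f k))\<^sup>*"
        using f by (simp add: mg_rel_mkT shapes_def)
    qed
  qed
next
  show "{T. arborescence V j v0 T} \<subseteq>
     (\<lambda>(f,k). mkT V v0 f k) ` (SIGMA f:shapes V v0. PiE (V-{v0}) (\<lambda>u. {..<j u (f u)}))"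
  proof
    fix T assume "T \<in> {T. arborescence V j v0 T}"
    then have sub: "T \<subseteq> mg_edges V j"
      and uni: "\<forall>v\<in>V. v \<noteq> v0 \<longrightarrow> (\<exists>!e. e \<in> T \<and> fst e = v)"
      and nr: "\<forall>e\<in>T. fst e \<noteq> v0"
      and reach: "\<forall>v\<in>V. (v, v0) \<in> (mg_rel T)\<^sup>*"
      by (auto simp: arborescence_def)
    define f where "f = (\<lambda>u. if u \<in> V-{v0} then fst (snd (THE e. e\<in>T \<and> fst e = u)) else undefined)"
    define k where "k = (\<lambda>u. if u \<in> V-{v0} then snd (snd (THE e. e\<in>T \<and> fst e = u)) else undefined)"
    have the: "(THE e. e\<in>T \<and> fst e = u) = (u, f u, k u)" "(THE e. e\<in>T \<and> fst e = u) \<in> T"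
      if "u \<in> V - {v0}" for u
    proof -
      have "(THE e. e\<in>T \<and> fst e = u) \<in> T \<and> fst (THE e. e\<in>T \<and> fst e = u) = u"
      proof -
        have ex: "\<exists>!e. e\<in>T \<and> fst e = u" using uni that by blast
        show ?thesis by (rule theI'[OF ex])
      qed
      then show "(THE e. e\<in>T \<and> fst e = u) = (u, f u, k u)" "(THE e. e\<in>T \<and> fst e = u) \<in> T"
        using that unfolding f_def k_def by (auto simp: prod_eq_iff)
    qed
    have key: "(u, f u, k u) \<in> T" if "u \<in> V - {v0}" for u
      using the[OF that] by simp
    have Teq: "T = mkT V v0 f k"
    proof
      show "T \<subseteq> mkT V v0 f k"
      proof
        fix e assume e: "e \<in> T"
        obtain a b c where abc: "e = (a,b,c)" by (cases e) auto
        have a: "a \<in> V - {v0}" using e abc sub nr by (auto simp: mg_edges_def)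
        have "(THE e. e\<in>T \<and> fst e = a) = e"
          using uni a e abc by (intro the1_equality) auto
        then have "e = (a, f a, k a)" using the[OF a] by simp
        then show "e \<in> mkT V v0 f k" using a by (auto simp: mkT_def)
      qed
      show "mkT V v0 f k \<subseteq> T" using key by (auto simp: mkT_def)
    qed
    have fS: "f \<in> shapes V v0"
    proof -
      have "f u \<in> V" if "u \<in> V - {v0}" for u
        using key[OF that] sub by (auto simp: mg_edges_def)
      moreover have "f u = undefined" if "u \<notin> V - {v0}" for u
        using that unfolding f_def by auto
      ultimately have "f \<in> PiE (V - {v0}) (\<lambda>_. V)"
        unfolding PiE_def Pi_def extensional_def by blast
      moreover have "\<forall>v\<in>V. (v, v0) \<in> (frel V v0 f)\<^sup>*"
        using reach Teq mg_rel_mkT by metis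
      ultimately show ?thesis by (simp add: shapes_def)
    qed
    have kS: "k \<in> PiE (V-{v0}) (\<lambda>u. {..<j u (f u)})"
    proof -
      have "k u < j u (f u)" if "u \<in> V - {v0}" for u
        using key[OF that] sub by (auto simp: mg_edges_def)
      then show ?thesis unfolding PiE_def Pi_def extensional_def by (auto simp: k_def)
    qed
    show "T \<in> (\<lambda>(f,k). mkT V v0 f k) ` (SIGMA f:shapes V v0. PiE (V-{v0}) (\<lambda>u. {..<j u (f u)}))"
      using fS kS Teq by (intro rev_image_eqI[of "(f,k)"]) auto
  qed
qed

lemma mkT_inj:
  "inj_on (\<lambda>(f,k). mkT V v0 f k) (SIGMA f:shapes V v0. PiE (V-{v0}) (\<lambda>u. {..<j u (f u)}))"
proof (rule inj_onI, clarify)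
  fix f k f' k'
  assume f: "f \<in> shapes V v0" and k: "k \<in> PiE (V-{v0}) (\<lambda>u. {..<j u (f u)})"
    and f': "f' \<in> shapes V v0" and k': "k' \<in> PiE (V-{v0}) (\<lambda>u. {..<j u (f' u)})"
    and eq: "mkT V v0 f k = mkT V v0 f' k'"
  have pt: "f u = f' u \<and> k u = k' u" if "u \<in> V - {v0}" for u
  proof -
    have "(u, f u, k u) \<in> mkT V v0 f' k'" using eq that by (auto simp: mkT_def)
    then show ?thesis by (auto simp: mkT_def)
  qed
  show "f = f' \<and> k = k'"
  proof
    show "f = f'"
    proof
      fix u show "f u = f' u"
      proof (cases "u \<in> V - {v0}")
        case True then show ?thesis using pt by blast
      next
        case False
        have "f \<in> PiE (V - {v0}) (\<lambda>_. V)" "f' \<in> PiE (V - {v0}) (\<lambda>_. V)"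
          using f f' by (auto simp: shapes_def)
        then show ?thesis using False PiE_arb by metis
      qed
    qed
    show "k = k'"
    proof
      fix u show "k u = k' u"
      proof (cases "u \<in> V - {v0}")
        case True then show ?thesis using pt by blast
      next
        case False then show ?thesis using k k' PiE_arb by metis
      qed
    qed
  qed
qed

lemma finite_shapes: "finite V \<Longrightarrow> finite (shapes V v0)"
  by (rule finite_subset[of _ "PiE (V - {v0}) (\<lambda>_. V)"]) (auto simp: shapes_def intro: finite_PiE)

lemma ar_formula:
  assumes "finite V"
  shows "ar V j v0 = (\<Sum>f\<in>shapes V v0. \<Prod>u\<in>V-{v0}. j u (f u))"
proof -
  have "ar V j v0 = card (SIGMA f:shapes V v0. PiE (V-{v0}) (\<lambda>u. {..<j u (f u)}))"
    unfolding ar_def arb_eq by (rule card_image[OF mkT_inj])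
  also have "\<dots> = (\<Sum>f\<in>shapes V v0. card (PiE (V-{v0}) (\<lambda>u. {..<j u (f u)})))"
    using assms by (intro card_SigmaI finite_shapes) (auto intro: finite_PiE)
  also have "\<dots> = (\<Sum>f\<in>shapes V v0. \<Prod>u\<in>V-{v0}. j u (f u))"
    using assms by (simp add: card_PiE)
  finally show ?thesis .
qed


definition good :: "'a set \<Rightarrow> ('a \<Rightarrow> 'a \<Rightarrow> nat) \<Rightarrow> 'a \<Rightarrow> 'a set \<Rightarrow> ('a \<Rightarrow> 'a) \<Rightarrow> bool" where
  "good V j v0 S f \<longleftrightarrow> (\<forall>u\<in>S-{v0}. f u \<in> S \<and> 1 \<le> j u (f u)) \<and> (\<forall>v\<in>S. (v, v0) \<in> (frel S v0 f)\<^sup>*)"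

lemma cross_edge:
  assumes "(a, b) \<in> r\<^sup>*" "a \<notin> S" "b \<in> S"
  shows "\<exists>w x. (w, x) \<in> r \<and> w \<notin> S \<and> x \<in> S"
  using assms
proof (induction rule: rtrancl_induct)
  case base then show ?case by simp
next
  case (step y z)
  then show ?case by (cases "y \<in> S") auto
qed

lemma good_step:
  assumes g: "good V j v0 S f" and w: "w \<notin> S" "x \<in> S" "1 \<le> j w x" and v0: "v0 \<in> S"
  shows "good V j v0 (insert w S) (f(w := x))"
proof -
  have wv: "w \<noteq> v0" using w v0 by auto
  have fr: "frel (insert w S) v0 (f(w := x)) = insert (w, x) (frel S v0 f)"
    using w wv unfolding frel_def by auto
  have "(v, v0) \<in> (insert (w, x) (frel S v0 f))\<^sup>*" if "v \<in> S" for v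
    using g that rtrancl_mono[of "frel S v0 f" "insert (w, x) (frel S v0 f)"]
    unfolding good_def by blast
  moreover have "(w, v0) \<in> (insert (w, x) (frel S v0 f))\<^sup>*"
  proof -
    have "(x, v0) \<in> (insert (w, x) (frel S v0 f))\<^sup>*"
      using g w(2) rtrancl_mono[of "frel S v0 f" "insert (w, x) (frel S v0 f)"]
      unfolding good_def by blast
    then show ?thesis by (meson converse_rtrancl_into_rtrancl insertI1)
  qed
  ultimately show ?thesis using g w wv unfolding good_def fr by auto
qed

lemma exists_good:
  assumes fin: "finite V" and v0: "v0 \<in> V"
    and conn: "\<forall>u\<in>V. \<forall>v\<in>V. (u, v) \<in> (mg_rel (mg_edges V j))\<^sup>*"
  shows "\<exists>f. good V j v0 V f"
proof -
  have "\<forall>S f. card (V - S) = n \<longrightarrow> v0 \<in> S \<longrightarrow> S \<subseteq> V \<longrightarrow> good V j v0 S f \<longrightarrow> (\<exists>g. good V j v0 V g)" for n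
  proof (induction n)
    case 0
    show ?case
    proof (intro allI impI)
      fix S f assume "card (V - S) = 0" "v0 \<in> S" "S \<subseteq> V" "good V j v0 S f"
      then have "S = V" using fin by auto
      then show "\<exists>g. good V j v0 V g" using \<open>good V j v0 S f\<close> by blast
    qed
  next
    case (Suc n)
    show ?case
    proof (intro allI impI)
      fix S f assume c: "card (V - S) = Suc n" and s: "v0 \<in> S" "S \<subseteq> V" and g: "good V j v0 S f"
      then obtain y where y: "y \<in> V" "y \<notin> S" by (metis Diff_iff card_0_eq Zero_not_Suc ex_in_conv fin finite_Diff)
      have "(y, v0) \<in> (mg_rel (mg_edges V j))\<^sup>*" using conn y v0 by auto
      from cross_edge[OF this y(2) s(1)] obtain w x where
        wx: "(w, x) \<in> mg_rel (mg_edges V j)" "w \<notin> S" "x \<in> S" by blast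
      then have wV: "w \<in> V" and j1: "1 \<le> j w x" by (auto simp: mg_rel_def mg_edges_def)
      have g2: "good V j v0 (insert w S) (f(w := x))"
        using good_step[OF g wx(2) wx(3) j1 s(1)] .
      have "card (V - insert w S) = n"
        using c wV wx(2) fin by (metis Diff_insert card_Diff_singleton diff_Suc_1 finite_Diff DiffI)
      then show "\<exists>g. good V j v0 V g"
        using Suc.IH g2 s wV by blast
    qed
  qed
  moreover have "good V j v0 {v0} f" for f
    unfolding good_def by auto
  ultimately show ?thesis using v0 by blast
qed

lemma ar_pos:
  assumes fin: "finite V" and v0: "v0 \<in> V"
    and conn: "\<forall>u\<in>V. \<forall>v\<in>V. (u, v) \<in> (mg_rel (mg_edges V j))\<^sup>*"
  shows "ar V j v0 > 0"
proof -
  obtain f where g: "good V j v0 V f" using exists_good[OF assms] by blast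
  define h where "h = restrict f (V - {v0})"
  have fr: "frel V v0 h = frel V v0 f" unfolding frel_def h_def by auto
  have hS: "h \<in> shapes V v0"
    using g fr unfolding shapes_def good_def by (auto simp: h_def)
  have "(\<Prod>u\<in>V-{v0}. j u (h u)) > 0"
    using g fin unfolding good_def h_def by (intro prod_pos) (auto simp: Suc_le_eq)
  then have "(\<Sum>f\<in>shapes V v0. \<Prod>u\<in>V-{v0}. j u (f u)) > 0"
    using hS fin finite_shapes
    by (metis (no_types, lifting) gr0I sum_eq_0_iff)
  then show ?thesis using ar_formula[OF fin] by simp
qed


lemma shapes_noloop:
  assumes f: "f \<in> shapes V v0" and u: "u \<in> V - {v0}"
  shows "f u \<noteq> u"
proof
  assume fu: "f u = u"
  have "z = u" if "(u, z) \<in> (frel V v0 f)\<^sup>*" for z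
    using that
  proof (induction rule: rtrancl_induct)
    case base then show ?case by simp
  next
    case (step y z) then show ?case using fu by (auto simp: frel_def)
  qed
  moreover have "(u, v0) \<in> (frel V v0 f)\<^sup>*" using f u by (auto simp: shapes_def)
  ultimately show False using u by auto
qed

theorem claim4p7:
  fixes V :: "'a set" and v0 :: 'a and j j' :: "'a \<Rightarrow> 'a \<Rightarrow> nat"
  assumes "finite V" and "v0 \<in> V"
    and "eulerian V j" and "eulerian V j'"
    and "\<forall>u v. j' u v \<ge> 1 \<longleftrightarrow> j u v \<ge> 1"
    and "\<forall>u v. j u v \<ge> j' u v"
  shows "real (ar V j' v0) / real (ar V j v0) \<ge>
         (\<Prod>(u, v) \<in> {(u, v). u \<in> V \<and> v \<in> V \<and> u \<noteq> v \<and> j u v \<ge> 1}.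
            real (j' u v) / real (j u v))"
proof -
  note fin = assms(1)
  define E where "E = {(u, v). u \<in> V \<and> v \<in> V \<and> u \<noteq> v \<and> j u v \<ge> 1}"
  define r where "r = (\<lambda>(u, v). real (j' u v) / real (j u v))"
  define P where "P = prod r E"
  have Pdef: "(\<Prod>(u, v) \<in> {(u, v). u \<in> V \<and> v \<in> V \<and> u \<noteq> v \<and> j u v \<ge> 1}.
            real (j' u v) / real (j u v)) = P"
    unfolding P_def E_def r_def by simp
  have finE: "finite E"
    by (rule finite_subset[of _ "V \<times> V"]) (auto simp: E_def fin)
  have r01: "0 \<le> r e \<and> r e \<le> 1" for e
    using assms(6) by (cases e) (auto simp: r_def divide_le_eq_1)
  have P0: "P \<ge> 0" unfolding P_def using r01 by (intro prod_nonneg) auto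
  have conn: "\<forall>u\<in>V. \<forall>v\<in>V. (u, v) \<in> (mg_rel (mg_edges V j))\<^sup>*"
    using assms(3) by (simp add: eulerian_def)
  have pos: "ar V j v0 > 0" using ar_pos[OF fin assms(2) conn] .
  have each: "real (\<Prod>u\<in>V-{v0}. j' u (f u)) \<ge> P * real (\<Prod>u\<in>V-{v0}. j u (f u))"
    if f: "f \<in> shapes V v0" for f
  proof (cases "\<exists>u\<in>V-{v0}. j u (f u) = 0")
    case True
    then have "(\<Prod>u\<in>V-{v0}. j u (f u)) = 0" using fin by auto
    then show ?thesis by (simp add: prod_nonneg)
  next
    case False
    define U where "U = V - {v0}"
    define g where "g = (\<lambda>u. (u, f u))"
    have fV: "f u \<in> V" if "u \<in> U" for u using f that by (auto simp: shapes_def U_def PiE_def Pi_def)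
    have sub: "g ` U \<subseteq> E"
    proof
      fix e assume "e \<in> g ` U"
      then obtain u where u: "u \<in> U" "e = (u, f u)" by (auto simp: g_def)
      have "f u \<noteq> u" using shapes_noloop[OF f] u(1) unfolding U_def by blast
      moreover have "1 \<le> j u (f u)" using False u(1) unfolding U_def by (simp add: Suc_le_eq)
      ultimately show "e \<in> E" using u fV[OF u(1)] unfolding E_def U_def by auto
    qed
    have inj: "inj_on g U" by (auto simp: g_def inj_on_def)
    have "P = prod r (E - g ` U) * prod r (g ` U)"
      unfolding P_def using prod.subset_diff[OF sub finE] .
    also have "\<dots> \<le> 1 * prod r (g ` U)"
      using r01 by (intro mult_right_mono prod_le_1 prod_nonneg) auto
    also have "prod r (g ` U) = (\<Prod>u\<in>U. r (u, f u))"
      using prod.reindex[OF inj, of r] by (simp add: g_def)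
    finally have Pl: "P \<le> (\<Prod>u\<in>U. r (u, f u))" by simp
    have "real (\<Prod>u\<in>U. j' u (f u)) = (\<Prod>u\<in>U. r (u, f u) * real (j u (f u)))"
      using False unfolding U_def by (auto simp: r_def intro!: prod.cong)
    also have "\<dots> = (\<Prod>u\<in>U. r (u, f u)) * real (\<Prod>u\<in>U. j u (f u))"
      by (simp add: prod.distrib)
    also have "\<dots> \<ge> P * real (\<Prod>u\<in>U. j u (f u))"
      using Pl by (intro mult_right_mono) (auto simp: prod_nonneg)
    finally show ?thesis unfolding U_def .
  qed
  have "real (ar V j' v0) = (\<Sum>f\<in>shapes V v0. real (\<Prod>u\<in>V-{v0}. j' u (f u)))"
    using ar_formula[OF fin] by simp
  also have "\<dots> \<ge> (\<Sum>f\<in>shapes V v0. P * real (\<Prod>u\<in>V-{v0}. j u (f u)))"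
    using each by (intro sum_mono) auto
  also have "(\<Sum>f\<in>shapes V v0. P * real (\<Prod>u\<in>V-{v0}. j u (f u))) = P * real (ar V j v0)"
    using ar_formula[OF fin] by (simp add: sum_distrib_left)
  finally have "P * real (ar V j v0) \<le> real (ar V j' v0)" .
  then have "P \<le> real (ar V j' v0) / real (ar V j v0)"
    using pos by (simp add: le_divide_eq)
  then show ?thesis using Pdef by simp
qed

end
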